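(* Let $c>0$ and $\alpha\in(0,2)$, and let $s_{\alpha,c}$ be the SIGTRON function defined below. Then $s_{\alpha,c}$ has an inflection point $x_{ip}$ lying in the interior of $\mathrm{dom}(\sigma_{\alpha,c})$, given by $$x_{ip}=-\ln_{\alpha,c}\!\left(\frac{c\alpha}{2-\alpha}\right).$$ When $\alpha=1$, $x_{ip}=0$, which is the point where $s_{\alpha,c}=1/2$.
   Context: For $c>0$, $\alpha\ge0$, $\alpha\ne1$, put $c_\alpha=\frac{1}{\alpha-1}c^{1-\alpha}$ and $x_\alpha=\frac{1}{\alpha-1}x^{1-\alpha}$. The extended logarithm is $\ln_{\alpha,c}(x)=\ln(x/c)$ if $\alpha=1$ and $\ln_{\alpha,c}(x)=c_\alpha-x_\alpha$ otherwise (for $x>0$). The extended exponential is $\exp_{\alpha,c}(x)=c\exp(x)$ if $\alpha=1$ and $c\left(1-\frac{x}{c_\alpha}\right)^{1/(1-\alpha)}$ otherwise, with domain $\mathbb R$ if $\alpha=1$, $\{x\ge c_\alpha\}$ if $0\le\alpha<1$, $\{x<c_\alpha\}$ if $\alpha>1$. The extended asymmetric sigmoid is $\sigma_{\alpha,c}(x)=\frac{c}{c+\exp_{\alpha,c}(-x)}$ with domain $\mathbb R$ if $\alpha=1$, $\{x\le-c_\alpha\}$ if $0\le\alpha<1$, $\{x\ge -c_\alpha\}$ if $\alpha>1$ (with $\sigma_{\alpha,c}(-c_\alpha)=0$ for $\alpha>1$). SIGTRON is $s_{\alpha,c}(x)=\sigma_{\alpha,c}(x)$ on $\mathrm{dom}(\sigma_{\alpha,c})$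 and $s_{\alpha,c}(x)=\sigma_P(x)$ otherwise, where $\sigma_P(x)=1$ for $x\ge0$ and $0$ for $x<0$. An inflection point is a point where the second derivative vanishes and the concavity changes. *)

theory Defs
  imports "HOL-Analysis.Analysis"
begin

definition c_alpha :: "real \<Rightarrow> real \<Rightarrow> real" where
  "c_alpha \<alpha> c = (1 / (\<alpha> - 1)) * c powr (1 - \<alpha>)"

definition ext_ln :: "real \<Rightarrow> real \<Rightarrow> real \<Rightarrow> real" where
  "ext_ln \<alpha> c x = (if \<alpha> = 1 then ln (x / c)
                     else c_alpha \<alpha> c - (1 / (\<alpha> - 1)) * x powr (1 - \<alpha>))"

definition ext_exp :: "real \<Rightarrow> real \<Rightarrow> real \<Rightarrow> real" where
  "ext_exp \<alpha> c x = (if \<alpha> = 1 then c * exp x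
                      else c * (1 - x / c_alpha \<alpha> c) powr (1 / (1 - \<alpha>)))"

definition dom_sigma :: "real \<Rightarrow> real \<Rightarrow> real set" where
  "dom_sigma \<alpha> c = (if \<alpha> = 1 then UNIV
                      else if \<alpha> < 1 then {x. x \<le> - c_alpha \<alpha> c}
                      else {x. x \<ge> - c_alpha \<alpha> c})"

text \<open>Extended asymmetric sigmoid; for alpha > 1 its value at -c_alpha is 0 by convention.\<close>
definition ext_sigmoid :: "real \<Rightarrow> real \<Rightarrow> real \<Rightarrow> real" where
  "ext_sigmoid \<alpha> c x = (if \<alpha> > 1 \<and> x = - c_alpha \<alpha> c then 0
                          else c / (c + ext_exp \<alpha> c (- x)))"

definition heaviside :: "real \<Rightarrow> real" where
  "heaviside x = (if x \<ge> 0 then 1 else 0)"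

definition sigtron :: "real \<Rightarrow> real \<Rightarrow> real \<Rightarrow> real" where
  "sigtron \<alpha> c x = (if x \<in> dom_sigma \<alpha> c then ext_sigmoid \<alpha> c x else heaviside x)"

definition inflection_point :: "(real \<Rightarrow> real) \<Rightarrow> real \<Rightarrow> bool" where
  "inflection_point f x \<longleftrightarrow>
     (\<exists>\<delta>>0. \<exists>f' f''.
        (\<forall>y\<in>ball x \<delta>. (f has_real_derivative f' y) (at y) \<and> (f' has_real_derivative f'' y) (at y))
        \<and> f'' x = 0
        \<and> (((\<forall>y\<in>{x-\<delta><..<x}. f'' y > 0) \<and> (\<forall>y\<in>{x<..<x+\<delta>}. f'' y < 0))
           \<or> ((\<forall>y\<in>{x-\<delta><..<x}. f'' y < 0) \<and> (\<forall>y\<in>{x<..<x+\<delta>}. f'' y > 0))))"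

end

theory Submission
  imports Defs
begin

lemma infl_lemma:
  fixes f g gd gdd :: "real \<Rightarrow> real"
  assumes d: "\<delta> > 0"
  and H: "\<And>y. y \<in> ball x0 \<delta> \<Longrightarrow> g y > 0 \<and> (g has_real_derivative gd y) (at y)
           \<and> (gd has_real_derivative gdd y) (at y) \<and> f y = 1 / (1 + g y)"
  and N0: "2 * (gd x0)^2 - gdd x0 * (1 + g x0) = 0"
  and NL: "\<And>y. y \<in> {x0-\<delta><..<x0} \<Longrightarrow> 2 * (gd y)^2 - gdd y * (1 + g y) > 0"
  and NR: "\<And>y. y \<in> {x0<..<x0+\<delta>} \<Longrightarrow> 2 * (gd y)^2 - gdd y * (1 + g y) < 0"
  shows "inflection_point f x0"
proof -
  define f1 where "f1 = (\<lambda>y. - gd y / (1 + g y)^2)"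
  define f2 where "f2 = (\<lambda>y. (2 * (gd y)^2 - gdd y * (1 + g y)) / (1 + g y)^3)"
  have D: "(f has_real_derivative f1 y) (at y) \<and> (f1 has_real_derivative f2 y) (at y)"
    if y: "y \<in> ball x0 \<delta>" for y
  proof
    from H[OF y] have gp: "g y > 0" and dg: "(g has_real_derivative gd y) (at y)"
      and dg1: "(gd has_real_derivative gdd y) (at y)" by auto
    have "((\<lambda>y. 1 / (1 + g y)) has_real_derivative f1 y) (at y)"
      unfolding f1_def using gp
      by (auto intro!: derivative_eq_intros dg simp: field_simps power2_eq_square)
    then show "(f has_real_derivative f1 y) (at y)"
      by (rule has_field_derivative_transform_within_open[OF _ open_ball y]) (use H in auto)
    have E: "(f1 has_real_derivative (- ((gdd y * (1 + g y)^2 - gd y * (2 * (1 + g y) * gd y)) / ((1 + g y)^2)^2))) (at y)"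
      unfolding f1_def using gp by (auto intro!: derivative_eq_intros dg dg1)
    have "1 + g y \<noteq> 0" using gp by simp
    then have "- ((gdd y * (1 + g y)\<^sup>2 - gd y * (2 * (1 + g y) * gd y)) / ((1 + g y)\<^sup>2)\<^sup>2) = f2 y"
      unfolding f2_def by (simp add: divide_simps) algebra
    with E show "(f1 has_real_derivative f2 y) (at y)" by simp
  qed
  have Z: "f2 x0 = 0" unfolding f2_def using N0 by simp
  have L: "\<forall>y\<in>{x0-\<delta><..<x0}. f2 y > 0"
  proof
    fix y assume y: "y \<in> {x0-\<delta><..<x0}"
    then have "y \<in> ball x0 \<delta>" by (auto simp: dist_real_def)
    then have "g y > 0" using H by auto
    then show "f2 y > 0" unfolding f2_def using NL[OF y] by simp
  qed
  have R: "\<forall>y\<in>{x0<..<x0+\<delta>}. f2 y < 0"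
  proof
    fix y assume y: "y \<in> {x0<..<x0+\<delta>}"
    then have "y \<in> ball x0 \<delta>" by (auto simp: dist_real_def)
    then have "g y > 0" using H by auto
    then show "f2 y < 0" unfolding f2_def using NR[OF y] by (simp add: divide_neg_pos)
  qed
  show ?thesis unfolding inflection_point_def
    apply (rule exI[where x=\<delta>], rule conjI[OF d], rule exI[where x=f1], rule exI[where x=f2])
    using D Z L R by blast
qed

lemma div_help: fixes c e :: real assumes "c > 0" "e > 0" shows "c / (c + c * e) = 1 / (1 + e)"
proof -
  have "c + c * e = c * (1 + e)" by (simp add: algebra_simps)
  then show ?thesis using assms by simp
qed

lemma case_one:
  fixes c :: real assumes c: "c > 0"
  shows "0 \<in> interior (dom_sigma 1 c) \<and> inflection_point (sigtron 1 c) 0 \<and> sigtron 1 c 0 = 1/2"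
proof (intro conjI)
  show "0 \<in> interior (dom_sigma 1 c)" by (simp add: dom_sigma_def)
  show "sigtron 1 c 0 = 1/2" using c
    by (simp add: sigtron_def dom_sigma_def ext_sigmoid_def ext_exp_def)
  show "inflection_point (sigtron 1 c) 0"
  proof (rule infl_lemma[where \<delta>=1 and g="\<lambda>y. exp (-y)" and gd="\<lambda>y. - exp (-y)" and gdd="\<lambda>y. exp (-y)"])
    fix y :: real
    have "sigtron 1 c y = 1 / (1 + exp (-y))" using c
      by (simp add: sigtron_def dom_sigma_def ext_sigmoid_def ext_exp_def div_help)
    then show "0 < exp (- y) \<and> ((\<lambda>y. exp (- y)) has_real_derivative - exp (- y)) (at y) \<and>
         ((\<lambda>y. - exp (- y)) has_real_derivative exp (- y)) (at y) \<and> sigtron 1 c y = 1 / (1 + exp (- y))"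
      by (auto intro!: derivative_eq_intros)
  next
    fix y :: real assume "y \<in> {0 - 1<..<0}"
    then have "exp (-y) > 1" by simp
    then show "2 * (- exp (- y))\<^sup>2 - exp (- y) * (1 + exp (- y)) > 0"
      by (simp add: power2_eq_square algebra_simps)
  next
    fix y :: real assume "y \<in> {0<..<0 + 1}"
    then have "exp (-y) < 1" by simp
    then show "2 * (- exp (- y))\<^sup>2 - exp (- y) * (1 + exp (- y)) < 0"
      by (simp add: power2_eq_square algebra_simps)
  qed simp_all
qed


lemma case_ne:
  fixes c \<alpha> :: real
  assumes c: "c > 0" and a0: "0 < \<alpha>" and a2: "\<alpha> < 2" and a1: "\<alpha> \<noteq> 1"
  shows "- ext_ln \<alpha> c (c * \<alpha> / (2 - \<alpha>)) \<in> interior (dom_sigma \<alpha> c)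
       \<and> inflection_point (sigtron \<alpha> c) (- ext_ln \<alpha> c (c * \<alpha> / (2 - \<alpha>)))"
proof -
  define ca where "ca = c_alpha \<alpha> c"
  define p where "p = 1 / (1 - \<alpha>)"
  define r where "r = \<alpha> / (2 - \<alpha>)"
  define x0 where "x0 = - ext_ln \<alpha> c (c * \<alpha> / (2 - \<alpha>))"
  define u where "u = (\<lambda>y::real. 1 + y / ca)"
  have cpos: "c powr (1 - \<alpha>) > 0" using c by simp
  have am1: "\<alpha> - 1 \<noteq> 0" "1 - \<alpha> \<noteq> 0" using a1 by auto
  have ca_ne: "ca \<noteq> 0" using am1 cpos by (simp add: ca_def c_alpha_def)
  have rpos: "r > 0" using a0 a2 by (simp add: r_def)
  have cr: "c * \<alpha> / (2 - \<alpha>) = c * r" by (simp add: r_def)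
  have x0eq: "x0 = ca * (r powr (1 - \<alpha>) - 1)"
    unfolding x0_def cr using a1 c rpos
    by (simp add: ext_ln_def ca_def c_alpha_def powr_mult algebra_simps diff_divide_distrib)
  define u0 where "u0 = u x0"
  have u0eq: "u0 = r powr (1 - \<alpha>)" using ca_ne by (simp add: u0_def u_def x0eq)
  have u0pos: "u0 > 0" using rpos by (simp add: u0eq)
  define \<delta> where "\<delta> = u0 * \<bar>ca\<bar> / 2"
  have dpos: "\<delta> > 0" using u0pos ca_ne by (simp add: \<delta>_def)
  have ub: "u y > u0 / 2" if y: "y \<in> ball x0 \<delta>" for y
  proof -
    have d: "\<bar>y - x0\<bar> < u0 * \<bar>ca\<bar> / 2" using y by (simp add: dist_real_def \<delta>_def abs_minus_commute)
    have e: "u y - u0 = (y - x0) / ca" by (simp add: u0_def u_def diff_divide_distrib)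
    have "\<bar>u y - u0\<bar> = \<bar>y - x0\<bar> / \<bar>ca\<bar>" by (simp add: e abs_divide)
    also have "\<dots> < u0 / 2" using d ca_ne by (simp add: divide_less_eq)
    finally show ?thesis by linarith
  qed
  have upos: "u y > 0" if "y \<in> ball x0 \<delta>" for y using ub[OF that] u0pos by linarith
  have dom: "y \<in> dom_sigma \<alpha> c \<and> y \<noteq> - ca" if uy: "u y > 0" for y
  proof -
    have "(ca + y) / ca > 0" using uy ca_ne by (simp add: u_def add_divide_distrib)
    then have q: "(ca + y > 0 \<and> ca > 0) \<or> (ca + y < 0 \<and> ca < 0)" by (simp add: zero_less_divide_iff)
    show ?thesis
    proof (cases "\<alpha> < 1")
      case True
      have "c powr (1 - \<alpha>) / (\<alpha> - 1) < 0" by (rule divide_pos_neg[OF cpos]) (use True in simp)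
      then have "ca < 0" by (simp add: ca_def c_alpha_def)
      then show ?thesis using q True by (auto simp: dom_sigma_def ca_def)
    next
      case False
      have "c powr (1 - \<alpha>) / (\<alpha> - 1) > 0" by (rule divide_pos_pos[OF cpos]) (use False a1 in simp)
      then have "ca > 0" by (simp add: ca_def c_alpha_def)
      then show ?thesis using q False a1 by (auto simp: dom_sigma_def ca_def)
    qed
  qed
  have sig: "sigtron \<alpha> c y = 1 / (1 + u y powr p)" if uy: "u y > 0" for y
  proof -
    have "ext_exp \<alpha> c (- y) = c * u y powr p" using a1 by (simp add: ext_exp_def u_def ca_def p_def)
    then show ?thesis using dom[OF uy] c uy
      by (simp add: sigtron_def ext_sigmoid_def ca_def div_help)
  qed
  define g where "g = (\<lambda>y. u y powr p)"
  define gd where "gd = (\<lambda>y. p * u y powr (p - 1) / ca)"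
  define gdd where "gdd = (\<lambda>y. p * (p - 1) * u y powr (p - 2) / ca^2)"
  have dg: "(g has_real_derivative gd y) (at y)" if uy: "u y > 0" for y
    unfolding g_def gd_def u_def using uy ca_ne
    by (auto intro!: derivative_eq_intros simp: u_def field_simps)
  have dgd: "(gd has_real_derivative gdd y) (at y)" if uy: "u y > 0" for y
    unfolding gdd_def gd_def u_def using uy ca_ne
    by (auto intro!: derivative_eq_intros simp: u_def field_simps power2_eq_square)
  have pca: "p / ca = - 1 / c powr (1 - \<alpha>)"
    using am1 cpos by (simp add: p_def ca_def c_alpha_def field_simps)
  have gdneg: "gd y < 0" if uy: "u y > 0" for y
  proof -
    have "gd y = (p / ca) * u y powr (p - 1)" by (simp add: gd_def)
    then show ?thesis using pca cpos uy by (simp add: mult_neg_pos)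
  qed
  have gx0: "g x0 = r"
    using rpos am1 by (simp add: g_def u0_def[symmetric] u0eq powr_powr p_def)
  have pp: "p * (p + 1) > 0"
  proof -
    have "p * (p + 1) = (2 - \<alpha>) / (1 - \<alpha>)^2" using am1 by (simp add: p_def field_simps power2_eq_square)
    moreover have "(1 - \<alpha>)^2 > 0" using am1 by simp
    ultimately show ?thesis using a2 by simp
  qed
  have a2': "2 - \<alpha> \<noteq> 0" using a2 by simp
  have pr: "(p + 1) * r = p - 1"
  proof -
    have e1: "p + 1 = (2 - \<alpha>) / (1 - \<alpha>)" using am1 by (simp add: p_def field_simps)
    have e2: "p - 1 = \<alpha> / (1 - \<alpha>)" using am1 by (simp add: p_def field_simps)
    show ?thesis unfolding e1 e2 r_def using a2' by simp
  qed
  have Neq: "2 * (gd y)^2 - gdd y * (1 + g y) = p * (p + 1) * u y powr (p - 2) / ca^2 * (g y - r)"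
    if uy: "u y > 0" for y
  proof -
    define w where "w = u y"
    have A: "(w powr (p - 1))^2 = w powr (p - 2) * w powr p"
    proof -
      have "(w powr (p - 1))^2 = w powr ((p - 1) + (p - 1))" unfolding power2_eq_square powr_add[symmetric] ..
      also have "\<dots> = w powr ((p - 2) + p)" by (simp add: algebra_simps)
      finally show ?thesis unfolding powr_add .
    qed
    have "2 * (gd y)^2 - gdd y * (1 + g y)
        = (2 * p^2 * (w powr (p - 1))^2 - p * (p - 1) * w powr (p - 2) * (1 + w powr p)) / ca^2"
      by (simp add: gd_def gdd_def g_def w_def power_divide power_mult_distrib diff_divide_distrib)
    also have "\<dots> = p * w powr (p - 2) / ca^2 * ((p + 1) * w powr p - (p - 1))"
      unfolding A by (simp add: field_simps power2_eq_square)
    also have "\<dots> = p * w powr (p - 2) / ca^2 * ((p + 1) * (w powr p - r))"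
      using pr by (simp add: right_diff_distrib)
    finally show ?thesis by (simp add: g_def w_def)
  qed
  have Kpos: "p * (p + 1) * u y powr (p - 2) / ca^2 > 0" if uy: "u y > 0" for y
    using pp uy ca_ne by simp
  have inball: "t \<in> ball x0 \<delta>" if "x0 - \<delta> < t" "t < x0 + \<delta>" for t
    using that by (simp add: dist_real_def abs_less_iff)
  have infl: "inflection_point (sigtron \<alpha> c) x0"
  proof (rule infl_lemma[where \<delta>=\<delta> and g=g and gd=gd and gdd=gdd, OF dpos])
    fix y assume y: "y \<in> ball x0 \<delta>"
    show "0 < g y \<and> (g has_real_derivative gd y) (at y) \<and> (gd has_real_derivative gdd y) (at y)
          \<and> sigtron \<alpha> c y = 1 / (1 + g y)"
      using upos[OF y] dg dgd sig by (simp add: g_def)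
  next
    show "2 * (gd x0)\<^sup>2 - gdd x0 * (1 + g x0) = 0"
      using Neq[of x0] u0pos gx0 by (simp add: u0_def)
  next
    fix y assume y: "y \<in> {x0 - \<delta><..<x0}"
    have "g x0 < g y"
    proof (rule DERIV_neg_imp_decreasing[of y x0 g])
      show "y < x0" using y by simp
      fix t assume "y \<le> t" "t \<le> x0"
      then have "t \<in> ball x0 \<delta>" using y inball[of t] dpos by auto
      then show "\<exists>z. (g has_real_derivative z) (at t) \<and> z < 0" using upos dg gdneg by blast
    qed
    moreover have "u y > 0" using upos inball[of y] y by auto
    ultimately show "2 * (gd y)\<^sup>2 - gdd y * (1 + g y) > 0"
      unfolding Neq[OF \<open>u y > 0\<close>] using Kpos[of y] gx0 by (intro mult_pos_pos) auto
  next
    fix y assume y: "y \<in> {x0<..<x0 + \<delta>}"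
    have "g y < g x0"
    proof (rule DERIV_neg_imp_decreasing[of x0 y g])
      show "x0 < y" using y by simp
      fix t assume "x0 \<le> t" "t \<le> y"
      then have "t \<in> ball x0 \<delta>" using y inball[of t] dpos by auto
      then show "\<exists>z. (g has_real_derivative z) (at t) \<and> z < 0" using upos dg gdneg by blast
    qed
    moreover have "u y > 0" using upos inball[of y] y by auto
    ultimately show "2 * (gd y)\<^sup>2 - gdd y * (1 + g y) < 0"
      unfolding Neq[OF \<open>u y > 0\<close>] using Kpos[of y] gx0 by (intro mult_pos_neg) auto
  qed
  have "x0 \<in> interior (dom_sigma \<alpha> c)"
    unfolding mem_interior using dpos upos dom by blast
  then show ?thesis using infl by (simp add: x0_def)
qed


theorem corollary1:
  fixes c \<alpha> :: real
  assumes "c > 0" and "0 < \<alpha>" and "\<alpha> < 2"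
  shows "let x_ip = - ext_ln \<alpha> c (c * \<alpha> / (2 - \<alpha>)) in
           x_ip \<in> interior (dom_sigma \<alpha> c)
         \<and> inflection_point (sigtron \<alpha> c) x_ip
         \<and> (\<alpha> = 1 \<longrightarrow> x_ip = 0 \<and> sigtron \<alpha> c x_ip = 1 / 2)"
proof (cases "\<alpha> = 1")
  case True
  have "- ext_ln \<alpha> c (c * \<alpha> / (2 - \<alpha>)) = 0" using True assms(1) by (simp add: ext_ln_def)
  then show ?thesis using True case_one[OF assms(1)] by (simp add: Let_def)
next
  case False
  then show ?thesis using case_ne[OF assms False] by (simp add: Let_def)
qed

end
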